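(* Let $\vec{S}$ be a signed digraph on $n$ vertices with no self-loops and no dual edges, and suppose $\vec{S}$ is cycle-disjoint. For $k=3,\ldots,n$ let $c_k^+$ (resp. $c_k^-$) be the number of positive (resp. negative) cycles of length $k$ in $\vec{S}$, and let $n_{\textrm{cyc}}=\sum_{k} k\,(c_k^+ + c_k^-)$ be the number of vertices lying on a cycle. Then the eigenvalue spectrum (as a multiset) of the adjacency matrix $\mathbf{A}$ of $\vec{S}$ consists of the eigenvalue $0$ with multiplicity $n-n_{\textrm{cyc}}$, together with the union, over $k=3,\ldots,n$, of $c_k^+$ copies of the $k$-th roots of unity and $c_k^-$ copies of the $k$-th roots of $-1$.
   Context: A signed digraph is a directed graph on vertex set $\{v_1,\ldots,v_n\}$ in which each edge $v_i\to v_j$ carries a sign $\sigma_{ij}\in\{-1,+1\}$. Its adjacency matrix $\mathbf{A}=(a_{ij})$ has $a_{ij}=\sigma_{ij}$ if $v_i\to v_j$ is an edge and $a_{ij}=0$ otherwise. No self-loops means $v_i\to v_i$ is never an edge; no dual edges means that if $v_i\to v_j$ is an edge then $v_j\to v_i$ is not. A cycle of length $k$ is a directed path of length $k$ from a vertex back to itself that visits no vertex twice (other than start/end), respecting edge directions; it is positive (negative) if the product of the signs of its edges is $+1$ ($-1$). $\vec{S}$ is cycle-disjoint if every vertex lies on at most one cycle. *)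

theory Defs
  imports "Jordan_Normal_Form.Char_Poly" "HOL-Computational_Algebra.Polynomial"
begin

text \<open>A signed digraph on vertices 0..n-1 is given by its adjacency matrix A (an n x n
  integer matrix with entries in {-1,0,1}); v_i -> v_j is an edge iff A(i,j) is nonzero,
  and then its sign is A(i,j).\<close>

definition signed_adj :: "nat \<Rightarrow> int mat \<Rightarrow> bool" where
  "signed_adj n A \<longleftrightarrow> A \<in> carrier_mat n n \<and>
     (\<forall>i<n. \<forall>j<n. A $$ (i,j) \<in> {-1, 0, 1})"

definition is_edge :: "int mat \<Rightarrow> nat \<Rightarrow> nat \<Rightarrow> bool" where
  "is_edge A i j \<longleftrightarrow> A $$ (i,j) \<noteq> 0"

definition no_self_loops :: "nat \<Rightarrow> int mat \<Rightarrow> bool" where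
  "no_self_loops n A \<longleftrightarrow> (\<forall>i<n. \<not> is_edge A i i)"

definition no_dual_edges :: "nat \<Rightarrow> int mat \<Rightarrow> bool" where
  "no_dual_edges n A \<longleftrightarrow> (\<forall>i<n. \<forall>j<n. is_edge A i j \<longrightarrow> \<not> is_edge A j i)"

definition cycle_list :: "nat \<Rightarrow> int mat \<Rightarrow> nat list \<Rightarrow> bool" where
  "cycle_list n A xs \<longleftrightarrow> xs \<noteq> [] \<and> distinct xs \<and> set xs \<subseteq> {..<n} \<and>
     (\<forall>i<length xs. is_edge A (xs ! i) (xs ! ((i + 1) mod length xs)))"

definition cycle_edges :: "nat list \<Rightarrow> (nat \<times> nat) set" where
  "cycle_edges xs = {(xs ! i, xs ! ((i + 1) mod length xs)) | i. i < length xs}"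

text \<open>A cycle is identified with its edge set (this identifies the rotations of a vertex list).\<close>

definition cycles :: "nat \<Rightarrow> int mat \<Rightarrow> (nat \<times> nat) set set" where
  "cycles n A = {cycle_edges xs | xs. cycle_list n A xs}"

definition cycle_vertices :: "(nat \<times> nat) set \<Rightarrow> nat set" where
  "cycle_vertices C = fst ` C"

definition cycle_sign :: "int mat \<Rightarrow> (nat \<times> nat) set \<Rightarrow> int" where
  "cycle_sign A C = (\<Prod>e\<in>C. A $$ e)"

definition cycles_of_len :: "nat \<Rightarrow> int mat \<Rightarrow> nat \<Rightarrow> int \<Rightarrow> (nat \<times> nat) set set" where
  "cycles_of_len n A k s = {C \<in> cycles n A. card C = k \<and> cycle_sign A C = s}"

definition cpos :: "nat \<Rightarrow> int mat \<Rightarrow> nat \<Rightarrow> nat" where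
  "cpos n A k = card (cycles_of_len n A k 1)"

definition cneg :: "nat \<Rightarrow> int mat \<Rightarrow> nat \<Rightarrow> nat" where
  "cneg n A k = card (cycles_of_len n A k (-1))"

definition cycle_disjoint :: "nat \<Rightarrow> int mat \<Rightarrow> bool" where
  "cycle_disjoint n A \<longleftrightarrow>
     (\<forall>v<n. \<forall>C1\<in>cycles n A. \<forall>C2\<in>cycles n A.
        v \<in> cycle_vertices C1 \<longrightarrow> v \<in> cycle_vertices C2 \<longrightarrow> C1 = C2)"

definition spectrum_mset :: "int mat \<Rightarrow> complex multiset" where
  "spectrum_mset A = proots (char_poly (map_mat complex_of_int A))"

definition roots_of_unity :: "nat \<Rightarrow> complex multiset" where
  "roots_of_unity k = proots (monom 1 k - 1)"

definition roots_of_minus_one :: "nat \<Rightarrow> complex multiset" where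
  "roots_of_minus_one k = proots (monom 1 k + 1)"

end

theory Submission imports Defs "HOL-Combinatorics.Cycles" begin

lemma ce_image: "cycle_edges xs = (\<lambda>i. (xs!i, xs!((i+1) mod length xs))) ` {..<length xs}"
  unfolding cycle_edges_def by auto

lemma cl_card: "distinct xs \<Longrightarrow> card (cycle_edges xs) = length xs"
  unfolding ce_image
  by (subst card_image) (auto simp: inj_on_def nth_eq_iff_index_eq)

lemma cl_vertices: "cycle_vertices (cycle_edges xs) = set xs"
  unfolding cycle_vertices_def ce_image image_image by (auto simp: set_conv_nth)

lemma cl_snd: "(a,b) \<in> cycle_edges xs \<Longrightarrow> b \<in> set xs"
  unfolding ce_image by (auto intro!: nth_mem) (metis gr_implies_not0 mod_less_divisor not_gr_zero)

lemma cl_fun: "distinct xs \<Longrightarrow> (a,b) \<in> cycle_edges xs \<Longrightarrow> (a,b') \<in> cycle_edges xs \<Longrightarrow> b = b'"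
  unfolding ce_image by (auto simp: nth_eq_iff_index_eq)

lemma cl_edge: "cycle_list n A xs \<Longrightarrow> (a,b) \<in> cycle_edges xs \<Longrightarrow> is_edge A a b"
  unfolding cycle_list_def ce_image by auto

lemma ce_subset: assumes "cycle_list n A xs" shows "cycle_edges xs \<subseteq> {..<n} \<times> {..<n}"
proof -
  have "set xs \<subseteq> {..<n}" "xs \<noteq> []" using assms unfolding cycle_list_def by auto
  then have "\<And>i. i < length xs \<Longrightarrow> xs ! i < n" by (meson lessThan_iff nth_mem subsetD)
  then show ?thesis unfolding ce_image using \<open>xs \<noteq> []\<close> by auto
qed

locale sdg =
  fixes n :: nat and A :: "int mat"
  assumes sa: "signed_adj n A" and nsl: "no_self_loops n A" and nde: "no_dual_edges n A"
    and cd: "cycle_disjoint n A"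
begin

abbreviation "CYC \<equiv> cycles n A"

lemma CYC_E: assumes "C \<in> CYC" obtains xs where "cycle_list n A xs" "C = cycle_edges xs"
  using assms unfolding cycles_def by auto

lemma finite_CYC: "finite CYC"
proof (rule finite_subset)
  show "CYC \<subseteq> Pow ({..<n} \<times> {..<n})" using ce_subset unfolding cycles_def by auto
qed auto

lemma finite_C: "C \<in> CYC \<Longrightarrow> finite C"
  by (erule CYC_E) (auto simp: ce_image)

lemma cv_sub: "C \<in> CYC \<Longrightarrow> cycle_vertices C \<subseteq> {..<n}"
  by (erule CYC_E) (auto simp: cl_vertices cycle_list_def)

lemma disj: "C1 \<in> CYC \<Longrightarrow> C2 \<in> CYC \<Longrightarrow> v \<in> cycle_vertices C1 \<Longrightarrow> v \<in> cycle_vertices C2 \<Longrightarrow> C1 = C2"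
  using cd cv_sub unfolding cycle_disjoint_def by blast

lemma card_cv: "C \<in> CYC \<Longrightarrow> card (cycle_vertices C) = card C"
  by (erule CYC_E) (auto simp: cl_vertices cl_card cycle_list_def distinct_card)

lemma card_ge3: assumes "C \<in> CYC" shows "3 \<le> card C"
proof -
  obtain xs where xs: "cycle_list n A xs" "C = cycle_edges xs" using assms by (rule CYC_E)
  have d: "distinct xs" "xs \<noteq> []" "set xs \<subseteq> {..<n}" using xs unfolding cycle_list_def by auto
  have e: "\<And>i. i < length xs \<Longrightarrow> is_edge A (xs ! i) (xs ! ((i + 1) mod length xs))"
    using xs unfolding cycle_list_def by auto
  have c: "card C = length xs" using xs d cl_card by simp
  have "length xs \<noteq> 1"
  proof
    assume "length xs = 1"
    then have "is_edge A (xs!0) (xs!0)" using e[of 0] by simp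
    moreover have "xs!0 < n" using d \<open>length xs = 1\<close> by (auto simp: subset_iff)
    ultimately show False using nsl unfolding no_self_loops_def by blast
  qed
  moreover have "length xs \<noteq> 2"
  proof
    assume "length xs = 2"
    then have "is_edge A (xs!0) (xs!1)" "is_edge A (xs!1) (xs!0)" using e[of 0] e[of 1] by auto
    moreover have "xs!0 < n" "xs!1 < n" using d \<open>length xs = 2\<close> by (auto simp: subset_iff)
    ultimately show False using nde unfolding no_dual_edges_def by blast
  qed
  moreover have "length xs \<noteq> 0" using d by simp
  ultimately show ?thesis using c by linarith
qed

lemma card_le_n: "C \<in> CYC \<Longrightarrow> card C \<le> n"
  using card_cv[of C] cv_sub[of C] by (metis card_lessThan card_mono finite_lessThan)

definition "E = \<Union> CYC"
definition "V = \<Union> (cycle_vertices ` CYC)"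
definition "succ i = (if i \<in> V then (SOME j. (i,j) \<in> E) else i)"

lemma succ_in: assumes "C \<in> CYC" "i \<in> cycle_vertices C" shows "(i, succ i) \<in> C"
proof -
  have iV: "i \<in> V" using assms unfolding V_def by auto
  obtain b where "(i,b) \<in> C" using assms(2) unfolding cycle_vertices_def by auto
  then have "\<exists>j. (i,j) \<in> E" using assms unfolding E_def by auto
  then have "(i, SOME j. (i,j) \<in> E) \<in> E" by (rule someI_ex)
  then have "(i, succ i) \<in> E" unfolding succ_def using iV by simp
  then obtain C' where C': "C' \<in> CYC" "(i, succ i) \<in> C'" unfolding E_def by auto
  then have "i \<in> cycle_vertices C'" unfolding cycle_vertices_def by force
  then have "C' = C" using disj C' assms by blast
  then show ?thesis using C' by simp
qed

lemma succ_unique: assumes "C \<in> CYC" "(i,j) \<in> C" shows "j = succ i"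
proof -
  have "i \<in> cycle_vertices C" using assms unfolding cycle_vertices_def by force
  then have s: "(i, succ i) \<in> C" using succ_in assms by blast
  obtain xs where xs: "cycle_list n A xs" "C = cycle_edges xs" using assms(1) by (rule CYC_E)
  show ?thesis using cl_fun[of xs i j "succ i"] xs s assms unfolding cycle_list_def by auto
qed

lemma E_succ: "(i,j) \<in> E \<Longrightarrow> j = succ i"
  unfolding E_def using succ_unique by auto

lemma succ_cv: "C \<in> CYC \<Longrightarrow> i \<in> cycle_vertices C \<Longrightarrow> succ i \<in> cycle_vertices C"
  using succ_in[of C i] by (auto elim!: CYC_E simp: cl_vertices dest: cl_snd)

lemma edge_C: "C \<in> CYC \<Longrightarrow> e \<in> C \<Longrightarrow> A $$ e \<noteq> 0"
  by (erule CYC_E) (metis cl_edge is_edge_def surj_pair)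

lemma succ_ne: assumes "C \<in> CYC" "i \<in> cycle_vertices C" shows "succ i \<noteq> i"
proof
  assume "succ i = i"
  then have "is_edge A i i" using edge_C[OF assms(1) succ_in[OF assms]] by (simp add: is_edge_def)
  moreover have "i < n" using cv_sub assms by auto
  ultimately show False using nsl unfolding no_self_loops_def by blast
qed

definition "VT T = \<Union> (cycle_vertices ` T)"
definition "perm T i = (if i \<in> VT T then succ i else i)"

lemma perm_single: assumes "cycle_list n A xs" "C = cycle_edges xs"
  shows "perm {C} = cycle_of_list xs"
proof
  fix i
  have C: "C \<in> CYC" using assms unfolding cycles_def by auto
  have d: "distinct xs" "xs \<noteq> []" using assms unfolding cycle_list_def by auto
  have cv: "cycle_vertices C = set xs" using assms cl_vertices by simp
  show "perm {C} i = cycle_of_list xs i"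
  proof (cases "i \<in> set xs")
    case True
    then obtain j where j: "j < length xs" "i = xs ! j" by (auto simp: in_set_conv_nth)
    have m: "map (cycle_of_list xs) xs = rotate 1 xs" using cyclic_rotation[OF d(1), of 1] by simp
    have "cycle_of_list xs i = map (cycle_of_list xs) xs ! j" using j by simp
    also have "\<dots> = rotate 1 xs ! j" unfolding m ..
    also have "\<dots> = xs ! (Suc j mod length xs)" using j by (simp add: nth_rotate1)
    finally have 1: "cycle_of_list xs i = xs ! (Suc j mod length xs)" .
    have "(i, xs ! (Suc j mod length xs)) \<in> C" using assms(2) j unfolding ce_image by auto
    then have "succ i = xs ! (Suc j mod length xs)" using succ_unique[OF C] by auto
    then show ?thesis using 1 True cv unfolding perm_def VT_def by auto
  next
    case False
    then show ?thesis using id_outside_supp[OF False] cv unfolding perm_def VT_def by auto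
  qed
qed

lemma sign_cycle: "distinct xs \<Longrightarrow> xs \<noteq> [] \<Longrightarrow> sign (cycle_of_list xs) = (-1::int)^(length xs - 1)"
proof (induction xs rule: cycle_of_list.induct)
  case (1 i j cs)
  have "sign (cycle_of_list (i # j # cs)) = sign (transpose i j \<circ> cycle_of_list (j # cs))"
    by (simp only: cycle_of_list.simps)
  also have "\<dots> = sign (transpose i j) * sign (cycle_of_list (j # cs))"
    by (rule sign_compose[OF permutation_swap_id permutation_of_cycle])
  also have "\<dots> = - ((-1)^(length cs))" using 1 by (simp add: sign_swap_id)
  finally show ?case by (simp del: cycle_of_list.simps)
next
  case "2_1" then show ?case by simp
next
  case ("2_2" v) then show ?case by simp
qed

lemma perm_empty: "perm {} = id"
  unfolding perm_def VT_def by auto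

lemma VT_insert: "VT (insert C T) = cycle_vertices C \<union> VT T" and VT_single: "VT {C} = cycle_vertices C"
  unfolding VT_def by auto

lemma VT_empty[simp]: "VT {} = {}" unfolding VT_def by auto

lemma perm_insert: assumes "T \<subseteq> CYC" "C \<in> CYC" "C \<notin> T"
  shows "perm (insert C T) = perm {C} \<circ> perm T"
proof
  fix i
  show "perm (insert C T) i = (perm {C} \<circ> perm T) i"
  proof (cases "i \<in> VT T")
    case True
    then obtain C' where C': "C' \<in> T" "i \<in> cycle_vertices C'" unfolding VT_def by auto
    have C'C: "C' \<in> CYC" using C' assms by auto
    have "C' \<noteq> C" using C' assms by auto
    have s: "succ i \<in> cycle_vertices C'" using succ_cv[OF C'C C'(2)] .
    have ns: "succ i \<notin> cycle_vertices C" using disj[of C C' "succ i"] assms(2) C'C s \<open>C' \<noteq> C\<close> by blast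
    have 2: "perm (insert C T) i = succ i" using True unfolding perm_def VT_insert by simp
    have 3: "perm T i = succ i" using True unfolding perm_def by simp
    have 4: "perm {C} (succ i) = succ i" using ns unfolding perm_def VT_single by simp
    show ?thesis using 2 3 4 by simp
  next
    case False
    then show ?thesis unfolding perm_def VT_insert VT_single by simp
  qed
qed

lemma perm_props: "finite T \<Longrightarrow> T \<subseteq> CYC \<Longrightarrow>
   perm T permutes {..<n} \<and> sign (perm T) = (\<Prod>C\<in>T. (-1::int)^(card C - 1))"
proof (induction T rule: finite_induct)
  case empty
  show ?case unfolding perm_empty by (auto simp: permutes_def)
next
  case (insert C T)
  have C: "C \<in> CYC" using insert by auto
  obtain xs where xs: "cycle_list n A xs" "C = cycle_edges xs" using C by (rule CYC_E)
  have d: "distinct xs" "xs \<noteq> []" "set xs \<subseteq> {..<n}" using xs unfolding cycle_list_def by auto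
  have "cycle_of_list xs permutes {..<n}" by (rule permutes_subset[OF cycle_permutes d(3)])
  then have ps: "perm {C} permutes {..<n}" unfolding perm_single[OF xs] .
  have cc: "card C = length xs" using cl_card d xs by simp
  have sc: "sign (perm {C}) = (-1::int)^(card C - 1)" unfolding perm_single[OF xs] cc by (rule sign_cycle[OF d(1) d(2)])
  have eq: "perm (insert C T) = perm {C} \<circ> perm T" by (rule perm_insert) (use insert in auto)
  have IH: "perm T permutes {..<n}" "sign (perm T) = (\<Prod>C\<in>T. (-1::int)^(card C - 1))" using insert by auto
  have f1: "perm {C} \<circ> perm T permutes {..<n}" by (rule permutes_compose[OF IH(1) ps])
  have pp1: "permutation (perm {C})" using finite_lessThan ps by (rule permutes_imp_permutation)
  have pp2: "permutation (perm T)" using finite_lessThan IH(1) by (rule permutes_imp_permutation)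
  have f2: "sign (perm {C} \<circ> perm T) = sign (perm {C}) * sign (perm T)"
    using sign_compose[OF pp1 pp2] .
  have f3: "(\<Prod>C\<in>insert C T. (-1::int)^(card C - 1)) = (-1)^(card C - 1) * (\<Prod>C\<in>T. (-1::int)^(card C - 1))"
    using \<open>finite T\<close> \<open>C \<notin> T\<close> by (rule prod.insert)
  have g1: "perm (insert C T) permutes {..<n}" by (subst eq) (rule f1)
  have g2: "sign (perm (insert C T)) = (\<Prod>C\<in>insert C T. (-1::int)^(card C - 1))"
proof -
    have "sign (perm (insert C T)) = sign (perm {C} \<circ> perm T)" using eq by (rule arg_cong)
    also have "\<dots> = sign (perm {C}) * sign (perm T)" by (rule f2)
    also have "\<dots> = (-1)^(card C - 1) * (\<Prod>C\<in>T. (-1::int)^(card C - 1))" unfolding sc IH(2) ..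
    also have "\<dots> = (\<Prod>C\<in>insert C T. (-1::int)^(card C - 1))" by (rule f3[symmetric])
    finally show ?thesis .
  qed
  show ?case by (rule conjI[OF g1 g2])
qed

lemma orbit: assumes p: "p permutes {0..<n}" and i: "i < n" "p i \<noteq> i"
  and adm: "\<forall>j<n. p j \<noteq> j \<longrightarrow> is_edge A j (p j)"
  shows "(i, p i) \<in> E"
proof -
  have perm: "permutation p" using p permutes_imp_permutation by blast
  define L where "L = least_power p i"
  define xs where "xs = support p i"
  have L1: "L > 1" using least_power_gt_one[OF perm i(2)] unfolding L_def by simp
  have len: "length xs = L" unfolding xs_def L_def by simp
  have nth: "\<And>j. j < L \<Longrightarrow> xs ! j = (p ^^ j) i" unfolding xs_def L_def by simp
  have dist: "distinct xs" unfolding xs_def using cycle_of_permutation[OF perm] .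
  have pL: "(p ^^ L) i = i" unfolding L_def using least_power_of_permutation[OF perm] by simp
  have lt: "\<And>j. (p ^^ j) i < n" using permutes_funpow[OF p] i(1) by (metis atLeastLessThan_iff permutes_in_image zero_le)
  have nxt: "\<And>j. j < L \<Longrightarrow> xs ! ((j+1) mod L) = p (xs ! j)"
  proof -
    fix j assume j: "j < L"
    show "xs ! ((j+1) mod L) = p (xs ! j)"
    proof (cases "j + 1 < L")
      case True
      then show ?thesis using nth j by simp
    next
      case False
      then have "j + 1 = L" using j by simp
      then have "(j+1) mod L = 0" by simp
      moreover have "p ((p ^^ j) i) = i" using pL \<open>j+1 = L\<close> by (metis Suc_eq_plus1 comp_apply funpow.simps(2))
      ultimately show ?thesis using nth j L1 by simp
    qed
  qed
  have cl: "cycle_list n A xs"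
    unfolding cycle_list_def
  proof (intro conjI allI impI)
    show "xs \<noteq> []" using len L1 by auto
    show "distinct xs" by (rule dist)
    show "set xs \<subseteq> {..<n}" using lt unfolding xs_def by auto
    fix j assume j: "j < length xs"
    have jL: "j < L" using j len by simp
    have ne: "j \<noteq> (j+1) mod L"
    proof (cases "j+1 < L")
      case True thus ?thesis by simp
    next
      case False hence "j+1 = L" using jL by simp
      thus ?thesis using L1 by auto
    qed
    have "xs ! ((j+1) mod L) \<noteq> xs ! j" using dist ne jL len L1 by (simp add: nth_eq_iff_index_eq)
    then have "p (xs ! j) \<noteq> xs ! j" using nxt jL by simp
    moreover have "xs ! j < n" using nth jL lt by simp
    ultimately have "is_edge A (xs ! j) (p (xs ! j))" using adm by blast
    then show "is_edge A (xs ! j) (xs ! ((j + 1) mod length xs))" using nxt jL len by simp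
  qed
  have "(xs ! 0, xs ! ((0+1) mod length xs)) \<in> cycle_edges xs" using len L1 unfolding ce_image by force
  moreover have "xs ! 0 = i" using nth L1 by simp
  moreover have "xs ! ((0+1) mod length xs) = p i" using nxt[of 0] L1 len \<open>xs ! 0 = i\<close> by simp
  ultimately have "(i, p i) \<in> cycle_edges xs" by simp
  then show ?thesis using cl unfolding E_def cycles_def by auto
qed

lemma adm_perm: assumes p: "p permutes {0..<n}"
  and adm: "\<forall>j<n. p j \<noteq> j \<longrightarrow> is_edge A j (p j)"
  shows "p = perm {C\<in>CYC. \<exists>v\<in>cycle_vertices C. p v \<noteq> v}"
proof -
  define T where "T = {C\<in>CYC. \<exists>v\<in>cycle_vertices C. p v \<noteq> v}"
  have ps: "\<And>j. j < n \<Longrightarrow> p j \<noteq> j \<Longrightarrow> p j = succ j" by (rule E_succ[OF orbit[OF p _ _ adm]])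
  have claim: "\<And>C w. C \<in> T \<Longrightarrow> w \<in> cycle_vertices C \<Longrightarrow> p w = succ w"
  proof -
    fix C w assume CT: "C \<in> T" and w: "w \<in> cycle_vertices C"
    then have C: "C \<in> CYC" and "\<exists>v\<in>cycle_vertices C. p v \<noteq> v" unfolding T_def by auto
    then obtain v where v: "v \<in> cycle_vertices C" "p v \<noteq> v" by auto
    obtain xs where xs: "cycle_list n A xs" "C = cycle_edges xs" using C by (rule CYC_E)
    define L where "L = length xs"
    have d: "distinct xs" "set xs \<subseteq> {..<n}" using xs unfolding cycle_list_def by auto
    have L3: "L \<ge> 3" using card_ge3[OF C] cl_card d xs unfolding L_def by simp
    have cv: "cycle_vertices C = set xs" using xs cl_vertices by simp
    have sx: "\<And>k. k < L \<Longrightarrow> succ (xs ! k) = xs ! (Suc k mod L)"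
    proof -
      fix k assume "k < L"
      then have "(xs ! k, xs ! (Suc k mod L)) \<in> C" using xs unfolding ce_image L_def by auto
      then show "succ (xs ! k) = xs ! (Suc k mod L)" using succ_unique[OF C] by auto
    qed
    have ltn: "\<And>k. k < L \<Longrightarrow> xs ! k < n" using d unfolding L_def by (meson lessThan_iff nth_mem subsetD)
    obtain a where a: "a < L" "v = xs ! a" using v cv unfolding L_def by (auto simp: in_set_conv_nth)
    have ind: "\<And>m. p (xs ! ((a+m) mod L)) = xs ! (Suc (a+m) mod L)"
    proof -
      fix m show "p (xs ! ((a+m) mod L)) = xs ! (Suc (a+m) mod L)"
      proof (induction m)
        case 0
        have "p v = succ v" using ps[OF ltn[OF a(1)]] v(2) a(2) by simp
        then show ?case using sx[OF a(1)] a by simp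
      next
        case (Suc m)
        define y where "y = xs ! (Suc (a+m) mod L)"
        have Lp: "L > 0" using L3 by simp
        have neq: "Suc (a+m) mod L \<noteq> (a+m) mod L" using L3 by (simp add: mod_Suc)
        have "y \<noteq> xs ! ((a+m) mod L)" unfolding y_def using d neq Lp unfolding L_def by (simp add: nth_eq_iff_index_eq)
        then have "p y \<noteq> y" using Suc.IH p unfolding y_def by (metis permutes_inj injD)
        moreover have "y < n" unfolding y_def using ltn Lp by simp
        ultimately have "p y = succ y" using ps by blast
        also have "\<dots> = xs ! (Suc (Suc (a+m) mod L) mod L)" unfolding y_def using sx Lp by simp
        also have "\<dots> = xs ! (Suc (a + Suc m) mod L)" by (simp add: mod_Suc_eq)
        finally show ?case unfolding y_def by (simp add: mod_Suc_eq)
      qed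
    qed
    obtain b where b: "b < L" "w = xs ! b" using w cv unfolding L_def by (auto simp: in_set_conv_nth)
    have e: "a + (b + L - a) = b + L" using a by simp
    have e2: "Suc (b + L) mod L = Suc b mod L" by (metis add_Suc mod_add_self2)
    have "p (xs ! b) = xs ! (Suc b mod L)" using ind[of "b + L - a"] b unfolding e e2 by simp
    then have "p w = xs ! (Suc b mod L)" using b by simp
    then show "p w = succ w" using sx b by simp
  qed
  show ?thesis unfolding T_def[symmetric]
  proof
    fix i
    show "p i = perm T i"
    proof (cases "i \<in> VT T")
      case True
      then obtain C where "C \<in> T" "i \<in> cycle_vertices C" unfolding VT_def by auto
      then show ?thesis using claim True unfolding perm_def by auto
    next
      case False
      show ?thesis
      proof (cases "p i = i")
        case True then show ?thesis using False unfolding perm_def by auto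
      next
        case pne: False
        have "i < n" using p pne by (metis atLeastLessThan_iff permutes_not_in zero_le)
        then have "(i, p i) \<in> E" by (rule orbit[OF p _ pne adm])
        then obtain C where C: "C \<in> CYC" "(i, p i) \<in> C" unfolding E_def by auto
        then have "i \<in> cycle_vertices C" unfolding cycle_vertices_def by force
        then have "C \<in> T" using C pne unfolding T_def by auto
        then have "i \<in> VT T" using \<open>i \<in> cycle_vertices C\<close> unfolding VT_def by blast
        then show ?thesis using False by contradiction
      qed
    qed
  qed
qed

lemma perm_inj: assumes "T1 \<subseteq> CYC" "T2 \<subseteq> CYC" "perm T1 = perm T2" shows "T1 = T2"
proof -
  have "\<And>T1 T2 C. T1 \<subseteq> CYC \<Longrightarrow> T2 \<subseteq> CYC \<Longrightarrow> perm T1 = perm T2 \<Longrightarrow> C \<in> T1 \<Longrightarrow> C \<in> T2"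
  proof -
    fix T1 T2 C assume a: "T1 \<subseteq> CYC" "T2 \<subseteq> CYC" "perm T1 = perm T2" "C \<in> T1"
    then have C: "C \<in> CYC" by auto
    have "card C \<ge> 3" using card_ge3[OF C] .
    then have "C \<noteq> {}" by auto
    then obtain v where v: "v \<in> cycle_vertices C" unfolding cycle_vertices_def by auto
    have "v \<in> VT T1" unfolding VT_def using a(4) v by blast
    then have "perm T1 v = succ v" unfolding perm_def by simp
    then have pv: "perm T2 v \<noteq> v" using succ_ne[OF C v] a by simp
    have "v \<in> VT T2"
    proof (rule ccontr)
      assume "v \<notin> VT T2"
      then have "perm T2 v = v" unfolding perm_def by simp
      with pv show False by simp
    qed
    then obtain C' where "C' \<in> T2" "v \<in> cycle_vertices C'" unfolding VT_def by blast
    then show "C \<in> T2" using disj[OF C _ v] a by auto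
  qed
  note r = this
  show ?thesis
  proof (rule equalityI; rule subsetI)
    fix C assume "C \<in> T1" then show "C \<in> T2" by (rule r[OF assms])
  next
    fix C assume "C \<in> T2" then show "C \<in> T1" by (rule r[OF assms(2,1) assms(3)[symmetric]])
  qed
qed

lemma finite_cv: "C \<in> CYC \<Longrightarrow> finite (cycle_vertices C)"
  by (rule finite_subset[OF cv_sub]) simp_all

lemma cv_disj: "C1 \<in> CYC \<Longrightarrow> C2 \<in> CYC \<Longrightarrow> C1 \<noteq> C2 \<Longrightarrow> cycle_vertices C1 \<inter> cycle_vertices C2 = {}"
  using disj by blast

lemma finite_T: "T \<subseteq> CYC \<Longrightarrow> finite T"
  by (rule finite_subset[OF _ finite_CYC])

lemma card_VT: assumes T: "T \<subseteq> CYC" shows "card (VT T) = (\<Sum>C\<in>T. card C)"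
proof -
  have "card (VT T) = (\<Sum>C\<in>T. card (cycle_vertices C))" unfolding VT_def
  proof (rule card_UN_disjoint[OF finite_T[OF T]])
    show "\<forall>i\<in>T. finite (cycle_vertices i)" using T finite_cv by auto
    show "\<forall>i\<in>T. \<forall>j\<in>T. i \<noteq> j \<longrightarrow> cycle_vertices i \<inter> cycle_vertices j = {}"
      using T cv_disj by auto
  qed
  also have "\<dots> = (\<Sum>C\<in>T. card C)" using T card_cv by (intro sum.cong) auto
  finally show ?thesis .
qed

lemma VT_sub: "T \<subseteq> CYC \<Longrightarrow> VT T \<subseteq> {0..<n}"
  unfolding VT_def using cv_sub by fastforce

lemma C_image: assumes C: "C \<in> CYC" shows "C = (\<lambda>i. (i, succ i)) ` cycle_vertices C"
proof
  show "C \<subseteq> (\<lambda>i. (i, succ i)) ` cycle_vertices C"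
  proof
    fix e assume e: "e \<in> C"
    obtain a b where ab: "e = (a,b)" by fastforce
    have "b = succ a" using succ_unique[OF C] e ab by simp
    moreover have "a \<in> cycle_vertices C" using e ab unfolding cycle_vertices_def by force
    ultimately show "e \<in> (\<lambda>i. (i, succ i)) ` cycle_vertices C" using ab by auto
  qed
  show "(\<lambda>i. (i, succ i)) ` cycle_vertices C \<subseteq> C" using succ_in[OF C] by auto
qed

lemma A_carrier: "A \<in> carrier_mat n n" using sa unfolding signed_adj_def by auto

lemma A_diag: "i < n \<Longrightarrow> A $$ (i,i) = 0" using nsl unfolding no_self_loops_def is_edge_def by auto

definition "B = char_poly_matrix (map_mat complex_of_int A)"

lemma B_carrier: "B \<in> carrier_mat n n" unfolding B_def using A_carrier by simp

lemma B_entry: "i < n \<Longrightarrow> j < n \<Longrightarrow>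
   B $$ (i,j) = (if i = j then [:0,1:] else 0) + [:- complex_of_int (A $$ (i,j)):]"
  unfolding B_def char_poly_matrix_def using A_carrier by simp

lemma B_diag: "i < n \<Longrightarrow> B $$ (i,i) = [:0,1:]" using B_entry A_diag by simp

lemma B_off: "i < n \<Longrightarrow> j < n \<Longrightarrow> i \<noteq> j \<Longrightarrow> B $$ (i,j) = [:- complex_of_int (A $$ (i,j)):]"
  using B_entry by simp

lemma const_prod: "(\<Prod>x\<in>S. [:f x:]) = [:\<Prod>x\<in>S. f x:]"
  by (induction S rule: infinite_finite_induct) (auto simp: mult.commute)

lemma prod_pm: "finite S \<Longrightarrow> (\<forall>x\<in>S. f x \<in> {1, -1::int}) \<Longrightarrow> prod f S \<in> {1,-1}"
  by (induction S rule: finite_induct) auto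

lemma sign_pm: assumes C: "C \<in> CYC" shows "cycle_sign A C \<in> {1,-1}"
proof -
  obtain xs where xs: "cycle_list n A xs" "C = cycle_edges xs" using C by (rule CYC_E)
  have "\<forall>e\<in>C. A $$ e \<in> {1,-1}"
  proof
    fix e assume e: "e \<in> C"
    obtain a b where ab: "e = (a,b)" by fastforce
    have "a < n" "b < n" using ce_subset[OF xs(1)] xs(2) e ab by auto
    then have "A $$ e \<in> {-1,0,1}" using sa ab unfolding signed_adj_def by auto
    moreover have "A $$ e \<noteq> 0" using edge_C[OF C e] .
    ultimately show "A $$ e \<in> {1,-1}" by auto
  qed
  then show ?thesis unfolding cycle_sign_def using prod_pm finite_C[OF C] by blast
qed

lemma pconst_mult: "[:a:] * [:b:] = [:a * (b::'a::comm_ring_1):]"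
  by (simp only: mult_pCons_left mult_zero_left smult_pCons smult_0_right pCons_0_0 add_0_right)

lemma neg1_sq: "(-1::'a::comm_ring_1)^m * (-1)^m = 1"
  by (simp add: power_mult_distrib[symmetric])

lemma Cterm: assumes C: "C \<in> CYC"
  shows "(of_int ((-1::int)^(card C - 1)) :: complex poly) * (\<Prod>e\<in>C. [:- complex_of_int (A $$ e):])
     = [:- complex_of_int (cycle_sign A C):]"
proof -
  obtain m where m: "card C = Suc m" using card_ge3[OF C] by (metis Suc_le_D numeral_3_eq_3)
  have "(\<Prod>e\<in>C. [:- complex_of_int (A $$ e):]) = [:\<Prod>e\<in>C. - complex_of_int (A $$ e):]"
    by (rule const_prod)
  also have "(\<Prod>e\<in>C. - complex_of_int (A $$ e)) = (-1)^card C * complex_of_int (cycle_sign A C)"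
    unfolding prod_uminus cycle_sign_def by simp
  finally have 1: "(\<Prod>e\<in>C. [:- complex_of_int (A $$ e):]) = [:(-1)^card C * complex_of_int (cycle_sign A C):]" .
  have 2: "(of_int ((-1::int)^(card C - 1)) :: complex poly) = [:(-1)^m:]" unfolding m of_int_poly by simp
  have 3: "(-1::complex)^m * ((-1)^(Suc m) * s) = - s" for s
  proof -
    have "(-1::complex)^m * ((-1)^(Suc m) * s) = - (((-1)^m * (-1)^m) * s)" by simp
    also have "\<dots> = - s" unfolding neg1_sq by simp
    finally show ?thesis .
  qed
  show ?thesis unfolding 1 unfolding 2 unfolding m pconst_mult 3 by (rule refl)
qed

lemma term_T: assumes T: "T \<subseteq> CYC"
  shows "(signof (perm T) :: complex poly) * (\<Prod>i = 0..<n. B $$ (i, perm T i))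
    = [:0,1:]^(n - (\<Sum>C\<in>T. card C)) * (\<Prod>C\<in>T. [:- complex_of_int (cycle_sign A C):])"
proof -
  have fT: "finite T" using finite_T[OF T] .
  have VS: "VT T \<subseteq> {0..<n}" using VT_sub[OF T] .
  have fV: "finite (VT T)" using VS finite_subset by blast
  have P: "(\<Prod>i = 0..<n. B $$ (i, perm T i)) = (\<Prod>i\<in>{0..<n} - VT T. B $$ (i, perm T i)) * (\<Prod>i\<in>VT T. B $$ (i, perm T i))"
    by (rule prod.subset_diff[OF VS]) simp
  have "(\<Prod>i\<in>{0..<n} - VT T. B $$ (i, perm T i)) = (\<Prod>i\<in>{0..<n} - VT T. [:0,1:])"
  proof (rule prod.cong)
    fix i assume i: "i \<in> {0..<n} - VT T"
    then have "perm T i = i" unfolding perm_def by simp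
    then show "B $$ (i, perm T i) = [:0,1:]" using B_diag i by simp
  qed simp
  also have "\<dots> = [:0,1:]^(n - (\<Sum>C\<in>T. card C))"
    using card_Diff_subset[OF fV VS] card_VT[OF T] by simp
  finally have P1: "(\<Prod>i\<in>{0..<n} - VT T. B $$ (i, perm T i)) = [:0,1:]^(n - (\<Sum>C\<in>T. card C))" .
  have "(\<Prod>i\<in>VT T. B $$ (i, perm T i)) = (\<Prod>i\<in>VT T. [:- complex_of_int (A $$ (i, succ i)):])"
  proof (rule prod.cong)
    fix i assume i: "i \<in> VT T"
    then obtain C where C: "C \<in> T" "i \<in> cycle_vertices C" unfolding VT_def by auto
    have CC: "C \<in> CYC" using C T by auto
    have "perm T i = succ i" using i unfolding perm_def by simp
    moreover have "succ i \<noteq> i" using succ_ne[OF CC C(2)] .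
    moreover have "i < n" "succ i < n" using cv_sub[OF CC] C(2) succ_cv[OF CC C(2)] by auto
    ultimately show "B $$ (i, perm T i) = [:- complex_of_int (A $$ (i, succ i)):]" using B_off by simp
  qed simp
  also have "\<dots> = (\<Prod>C\<in>T. \<Prod>i\<in>cycle_vertices C. [:- complex_of_int (A $$ (i, succ i)):])"
    unfolding VT_def
  proof (rule prod.UNION_disjoint[OF fT])
    show "\<forall>i\<in>T. finite (cycle_vertices i)" using T finite_cv by auto
    show "\<forall>i\<in>T. \<forall>j\<in>T. i \<noteq> j \<longrightarrow> cycle_vertices i \<inter> cycle_vertices j = {}"
      using T cv_disj by auto
  qed
  also have "\<dots> = (\<Prod>C\<in>T. \<Prod>e\<in>C. [:- complex_of_int (A $$ e):])"
  proof (rule prod.cong)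
    fix C assume "C \<in> T"
    then have CC: "C \<in> CYC" using T by auto
    have inj: "inj_on (\<lambda>i. (i, succ i)) (cycle_vertices C)" by (auto simp: inj_on_def)
    have "(\<Prod>e\<in>C. [:- complex_of_int (A $$ e):]) = (\<Prod>e\<in>(\<lambda>i. (i, succ i)) ` cycle_vertices C. [:- complex_of_int (A $$ e):])"
      using C_image[OF CC] by simp
    also have "\<dots> = (\<Prod>i\<in>cycle_vertices C. [:- complex_of_int (A $$ (i, succ i)):])"
      by (subst prod.reindex[OF inj]) simp
    finally show "(\<Prod>i\<in>cycle_vertices C. [:- complex_of_int (A $$ (i, succ i)):]) = (\<Prod>e\<in>C. [:- complex_of_int (A $$ e):])" by simp
  qed simp
  finally have P2: "(\<Prod>i\<in>VT T. B $$ (i, perm T i)) = (\<Prod>C\<in>T. \<Prod>e\<in>C. [:- complex_of_int (A $$ e):])" .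
  have S: "(signof (perm T) :: complex poly) = (\<Prod>C\<in>T. of_int ((-1::int)^(card C - 1)))"
    using perm_props[OF fT T] by simp
  have "(signof (perm T) :: complex poly) * (\<Prod>C\<in>T. \<Prod>e\<in>C. [:- complex_of_int (A $$ e):])
      = (\<Prod>C\<in>T. of_int ((-1::int)^(card C - 1)) * (\<Prod>e\<in>C. [:- complex_of_int (A $$ e):]))"
    unfolding S prod.distrib ..
  also have "\<dots> = (\<Prod>C\<in>T. [:- complex_of_int (cycle_sign A C):])"
    using T Cterm by (intro prod.cong) auto
  finally have Q: "(signof (perm T) :: complex poly) * (\<Prod>C\<in>T. \<Prod>e\<in>C. [:- complex_of_int (A $$ e):])
      = (\<Prod>C\<in>T. [:- complex_of_int (cycle_sign A C):])" .
  show ?thesis unfolding P P1 P2 using Q by (simp add: ac_simps)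
qed

lemma char_poly_sum: "char_poly (map_mat complex_of_int A) =
   (\<Sum>T\<in>Pow CYC. [:0,1:]^(n - (\<Sum>C\<in>T. card C)) * (\<Prod>C\<in>T. [:- complex_of_int (cycle_sign A C):]))"
proof -
  define F where "F p = (signof p :: complex poly) * (\<Prod>i = 0..<n. B $$ (i, p i))" for p
  have "char_poly (map_mat complex_of_int A) = det B" unfolding char_poly_def B_def ..
  also have "\<dots> = (\<Sum>p\<in>{p. p permutes {0..<n}}. F p)" unfolding F_def by (rule det_def'[OF B_carrier])
  also have "\<dots> = (\<Sum>p\<in>perm ` Pow CYC. F p)"
  proof (rule sum.mono_neutral_right)
    show "finite {p. p permutes {0..<n}}" by (rule finite_permutations) simp
    show "perm ` Pow CYC \<subseteq> {p. p permutes {0..<n}}"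
    proof
      fix p assume "p \<in> perm ` Pow CYC"
      then obtain T where T: "T \<subseteq> CYC" "p = perm T" by auto
      then show "p \<in> {p. p permutes {0..<n}}" using perm_props[OF finite_T[OF T(1)] T(1)] by (simp add: atLeast0LessThan)
    qed
    show "\<forall>p\<in>{p. p permutes {0..<n}} - perm ` Pow CYC. F p = 0"
    proof
      fix p assume p: "p \<in> {p. p permutes {0..<n}} - perm ` Pow CYC"
      then have pp: "p permutes {0..<n}" by simp
      have "\<not> (\<forall>j<n. p j \<noteq> j \<longrightarrow> is_edge A j (p j))"
      proof
        assume "\<forall>j<n. p j \<noteq> j \<longrightarrow> is_edge A j (p j)"
        then have "p = perm {C\<in>CYC. \<exists>v\<in>cycle_vertices C. p v \<noteq> v}" by (rule adm_perm[OF pp])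
        then have "p \<in> perm ` Pow CYC" by blast
        then show False using p by simp
      qed
      then obtain j where j: "j < n" "p j \<noteq> j" "\<not> is_edge A j (p j)" by blast
      have "p j < n" using pp j(1) by (metis atLeastLessThan_iff permutes_in_image zero_le)
      then have "B $$ (j, p j) = 0" using B_off j unfolding is_edge_def by simp
      then have "(\<Prod>i = 0..<n. B $$ (i, p i)) = 0" using j(1) by (intro prod_zero) auto
      then show "F p = 0" unfolding F_def by simp
    qed
  qed
  also have "\<dots> = (\<Sum>T\<in>Pow CYC. F (perm T))"
  proof (subst sum.reindex)
    show "inj_on perm (Pow CYC)" using perm_inj by (auto simp: inj_on_def)
  qed simp
  also have "\<dots> = (\<Sum>T\<in>Pow CYC. [:0,1:]^(n - (\<Sum>C\<in>T. card C)) * (\<Prod>C\<in>T. [:- complex_of_int (cycle_sign A C):]))"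
    unfolding F_def using term_T by (intro sum.cong) auto
  finally show ?thesis .
qed

lemma N_le: "(\<Sum>C\<in>CYC. card C) \<le> n"
proof -
  have "(\<Sum>C\<in>CYC. card C) = card (VT CYC)" using card_VT[of CYC] by simp
  also have "\<dots> \<le> card {0..<n}" using VT_sub[of CYC] by (intro card_mono) auto
  finally show ?thesis by simp
qed

lemma char_poly_prod: "char_poly (map_mat complex_of_int A) =
   [:0,1:]^(n - (\<Sum>C\<in>CYC. card C)) * (\<Prod>C\<in>CYC. [:0,1:]^(card C) + [:- complex_of_int (cycle_sign A C):])"
proof -
  define N where "N = (\<Sum>C\<in>CYC. card C)"
  define c where "c C = [:- complex_of_int (cycle_sign A C):]" for C
  define X where "X = ([:0,1:] :: complex poly)"
  have "X^(n - N) * (\<Prod>C\<in>CYC. X^(card C) + c C) = X^(n - N) * (\<Prod>C\<in>CYC. c C + X^(card C))"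
    by (simp add: add.commute)
  also have "\<dots> = X^(n - N) * (\<Sum>T\<in>Pow CYC. (\<Prod>C\<in>T. c C) * (\<Prod>C\<in>CYC - T. X^(card C)))"
    by (simp only: prod_add[OF finite_CYC])
  also have "\<dots> = (\<Sum>T\<in>Pow CYC. X^(n - N) * ((\<Prod>C\<in>T. c C) * X^(\<Sum>C\<in>CYC - T. card C)))"
    by (simp add: sum_distrib_left power_sum)
  also have "\<dots> = (\<Sum>T\<in>Pow CYC. X^(n - (\<Sum>C\<in>T. card C)) * (\<Prod>C\<in>T. c C))"
  proof (rule sum.cong)
    fix T assume "T \<in> Pow CYC"
    then have T: "T \<subseteq> CYC" by simp
    have fT: "finite T" using finite_T[OF T] .
    have d: "(\<Sum>C\<in>CYC - T. card C) = N - (\<Sum>C\<in>T. card C)" unfolding N_def by (rule sum_diff_nat[OF fT T])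
    have le: "(\<Sum>C\<in>T. card C) \<le> N" unfolding N_def by (rule sum_mono2[OF finite_CYC T]) simp
    have e: "(n - N) + (\<Sum>C\<in>CYC - T. card C) = n - (\<Sum>C\<in>T. card C)" using d le N_le unfolding N_def by linarith
    have "X^(n - N) * ((\<Prod>C\<in>T. c C) * X^(\<Sum>C\<in>CYC - T. card C)) = X^((n - N) + (\<Sum>C\<in>CYC - T. card C)) * (\<Prod>C\<in>T. c C)"
      by (simp add: power_add mult_ac)
    then show "X^(n - N) * ((\<Prod>C\<in>T. c C) * X^(\<Sum>C\<in>CYC - T. card C)) = X^(n - (\<Sum>C\<in>T. card C)) * (\<Prod>C\<in>T. c C)"
      unfolding e .
  qed simp
  finally show ?thesis unfolding char_poly_sum N_def c_def X_def ..
qed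

lemma Xpow: "[:0,1:]^k = (monom 1 k :: 'a::comm_ring_1 poly)"
  by (simp add: monom_altdef)

lemma factor_nz: assumes "k \<ge> 1" shows "[:0,1:]^k + [:c:] \<noteq> (0 :: complex poly)"
proof
  assume "[:0,1:]^k + [:c:] = (0 :: complex poly)"
  then have "coeff ([:0,1:]^k + [:c:]) k = 0" by simp
  moreover obtain j where "k = Suc j" using assms by (cases k) auto
  ultimately show False unfolding Xpow by simp
qed

lemma factor_roots: assumes C: "C \<in> CYC"
  shows "proots ([:0,1:]^(card C) + [:- complex_of_int (cycle_sign A C):]) =
     (if cycle_sign A C = 1 then roots_of_unity (card C) else roots_of_minus_one (card C))"
proof (cases "cycle_sign A C = 1")
  case True
  have "[:- complex_of_int (cycle_sign A C):] = - 1" using True by (simp add: one_pCons)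
  then show ?thesis using True unfolding roots_of_unity_def Xpow by simp
next
  case False
  then have "cycle_sign A C = -1" using sign_pm[OF C] by auto
  then have "[:- complex_of_int (cycle_sign A C):] = 1" by (simp add: one_pCons)
  then show ?thesis using False unfolding roots_of_minus_one_def Xpow by simp
qed

lemma proots_X: "proots ([:0,1:]^m :: complex poly) = replicate_mset m 0"
proof -
  have "proots ([:0,1:] :: complex poly) = {#0#}" using proots_linear_factor[of "0::complex"] by simp
  then show ?thesis by (simp add: proots_power)
qed

lemma spectrum_sum: "spectrum_mset A = replicate_mset (n - (\<Sum>C\<in>CYC. card C)) 0 +
   (\<Sum>C\<in>CYC. (if cycle_sign A C = 1 then roots_of_unity (card C) else roots_of_minus_one (card C)))"
proof -
  have nz: "\<And>C. C \<in> CYC \<Longrightarrow> [:0,1:]^(card C) + [:- complex_of_int (cycle_sign A C):] \<noteq> 0"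
    using factor_nz card_ge3 by (metis le_trans one_le_numeral)
  have P: "(\<Prod>C\<in>CYC. [:0,1:]^(card C) + [:- complex_of_int (cycle_sign A C):]) \<noteq> 0"
    using nz finite_CYC by (simp add: prod_zero_iff)
  have X: "([:0,1:] :: complex poly)^(n - (\<Sum>C\<in>CYC. card C)) \<noteq> 0" by simp
  have "spectrum_mset A = proots ([:0,1:]^(n - (\<Sum>C\<in>CYC. card C))) +
      proots (\<Prod>C\<in>CYC. [:0,1:]^(card C) + [:- complex_of_int (cycle_sign A C):])"
    unfolding spectrum_mset_def char_poly_prod by (rule proots_mult[OF X P])
  also have "proots (\<Prod>C\<in>CYC. [:0,1:]^(card C) + [:- complex_of_int (cycle_sign A C):]) =
     (\<Sum>C\<in>CYC. proots ([:0,1:]^(card C) + [:- complex_of_int (cycle_sign A C):]))"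
    by (rule proots_prod) (rule nz)
  also have "\<dots> = (\<Sum>C\<in>CYC. (if cycle_sign A C = 1 then roots_of_unity (card C) else roots_of_minus_one (card C)))"
    using factor_roots by (intro sum.cong) auto
  finally show ?thesis unfolding proots_X .
qed

lemma group_sum: "(\<Sum>C\<in>CYC. g C) =
   (\<Sum>k=3..n. (\<Sum>C\<in>cycles_of_len n A k 1. g C) + (\<Sum>C\<in>cycles_of_len n A k (-1). g C))"
proof -
  have "(\<Sum>C\<in>CYC. g C) = (\<Sum>k\<in>{3..n}. \<Sum>C\<in>{x. x \<in> CYC \<and> card x = k}. g C)"
  proof (rule sum.group[symmetric])
    show "finite CYC" by (rule finite_CYC)
    show "finite {3..n}" by simp
    show "card ` CYC \<subseteq> {3..n}" using card_ge3 card_le_n by auto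
  qed
  also have "\<dots> = (\<Sum>k=3..n. (\<Sum>C\<in>cycles_of_len n A k 1. g C) + (\<Sum>C\<in>cycles_of_len n A k (-1). g C))"
  proof (rule sum.cong)
    fix k
    have eq: "{x. x \<in> CYC \<and> card x = k} = cycles_of_len n A k 1 \<union> cycles_of_len n A k (-1)"
      unfolding cycles_of_len_def using sign_pm by auto
    have f1: "finite (cycles_of_len n A k 1)" unfolding cycles_of_len_def using finite_CYC by simp
    have f2: "finite (cycles_of_len n A k (-1))" unfolding cycles_of_len_def using finite_CYC by simp
    have dj: "cycles_of_len n A k 1 \<inter> cycles_of_len n A k (-1) = {}" unfolding cycles_of_len_def by auto
    show "(\<Sum>C\<in>{x. x \<in> CYC \<and> card x = k}. g C) = (\<Sum>C\<in>cycles_of_len n A k 1. g C) + (\<Sum>C\<in>cycles_of_len n A k (-1). g C)"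
      unfolding eq by (rule sum.union_disjoint[OF f1 f2 dj])
  qed simp
  finally show ?thesis .
qed

lemma sum_const_mset: "finite S \<Longrightarrow> (\<Sum>x\<in>S. (M :: 'b multiset)) = repeat_mset (card S) M"
  by (induction S rule: finite_induct) auto

lemma main: "spectrum_mset A =
           replicate_mset (n - (\<Sum>k=3..n. k * (cpos n A k + cneg n A k))) 0
           + (\<Sum>k=3..n. repeat_mset (cpos n A k) (roots_of_unity k)
                        + repeat_mset (cneg n A k) (roots_of_minus_one k))"
proof -
  have f: "\<And>k s. finite (cycles_of_len n A k s)" unfolding cycles_of_len_def using finite_CYC by simp
  have N: "(\<Sum>C\<in>CYC. card C) = (\<Sum>k=3..n. k * (cpos n A k + cneg n A k))"
  proof -
    have "(\<Sum>C\<in>CYC. card C) = (\<Sum>k=3..n. (\<Sum>C\<in>cycles_of_len n A k 1. card C) + (\<Sum>C\<in>cycles_of_len n A k (-1). card C))"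
      by (rule group_sum)
    also have "\<dots> = (\<Sum>k=3..n. k * (cpos n A k + cneg n A k))"
    proof (rule sum.cong)
      fix k
      have "(\<Sum>C\<in>cycles_of_len n A k 1. card C) = (\<Sum>C\<in>cycles_of_len n A k 1. k)"
        unfolding cycles_of_len_def by (intro sum.cong) auto
      moreover have "(\<Sum>C\<in>cycles_of_len n A k (-1). card C) = (\<Sum>C\<in>cycles_of_len n A k (-1). k)"
        unfolding cycles_of_len_def by (intro sum.cong) auto
      ultimately show "(\<Sum>C\<in>cycles_of_len n A k 1. card C) + (\<Sum>C\<in>cycles_of_len n A k (-1). card C) = k * (cpos n A k + cneg n A k)"
        unfolding cpos_def cneg_def by (simp add: algebra_simps)
    qed simp
    finally show ?thesis .
  qed
  have R: "(\<Sum>C\<in>CYC. (if cycle_sign A C = 1 then roots_of_unity (card C) else roots_of_minus_one (card C))) =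
     (\<Sum>k=3..n. repeat_mset (cpos n A k) (roots_of_unity k) + repeat_mset (cneg n A k) (roots_of_minus_one k))"
  proof -
    have "(\<Sum>C\<in>CYC. (if cycle_sign A C = 1 then roots_of_unity (card C) else roots_of_minus_one (card C))) =
      (\<Sum>k=3..n. (\<Sum>C\<in>cycles_of_len n A k 1. (if cycle_sign A C = 1 then roots_of_unity (card C) else roots_of_minus_one (card C)))
          + (\<Sum>C\<in>cycles_of_len n A k (-1). (if cycle_sign A C = 1 then roots_of_unity (card C) else roots_of_minus_one (card C))))"
      by (rule group_sum)
    also have "\<dots> = (\<Sum>k=3..n. repeat_mset (cpos n A k) (roots_of_unity k) + repeat_mset (cneg n A k) (roots_of_minus_one k))"
    proof (rule sum.cong)
      fix k
      have "(\<Sum>C\<in>cycles_of_len n A k 1. (if cycle_sign A C = 1 then roots_of_unity (card C) else roots_of_minus_one (card C)))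
          = (\<Sum>C\<in>cycles_of_len n A k 1. roots_of_unity k)"
        unfolding cycles_of_len_def by (intro sum.cong) auto
      also have "\<dots> = repeat_mset (cpos n A k) (roots_of_unity k)" unfolding cpos_def by (rule sum_const_mset[OF f])
      finally have 1: "(\<Sum>C\<in>cycles_of_len n A k 1. (if cycle_sign A C = 1 then roots_of_unity (card C) else roots_of_minus_one (card C)))
          = repeat_mset (cpos n A k) (roots_of_unity k)" .
      have "(\<Sum>C\<in>cycles_of_len n A k (-1). (if cycle_sign A C = 1 then roots_of_unity (card C) else roots_of_minus_one (card C)))
          = (\<Sum>C\<in>cycles_of_len n A k (-1). roots_of_minus_one k)"
        unfolding cycles_of_len_def by (intro sum.cong) auto
      also have "\<dots> = repeat_mset (cneg n A k) (roots_of_minus_one k)" unfolding cneg_def by (rule sum_const_mset[OF f])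
      finally have 2: "(\<Sum>C\<in>cycles_of_len n A k (-1). (if cycle_sign A C = 1 then roots_of_unity (card C) else roots_of_minus_one (card C)))
          = repeat_mset (cneg n A k) (roots_of_minus_one k)" .
      show "(\<Sum>C\<in>cycles_of_len n A k 1. (if cycle_sign A C = 1 then roots_of_unity (card C) else roots_of_minus_one (card C)))
          + (\<Sum>C\<in>cycles_of_len n A k (-1). (if cycle_sign A C = 1 then roots_of_unity (card C) else roots_of_minus_one (card C)))
          = repeat_mset (cpos n A k) (roots_of_unity k) + repeat_mset (cneg n A k) (roots_of_minus_one k)"
        unfolding 1 2 ..
    qed simp
    finally show ?thesis .
  qed
  show ?thesis using spectrum_sum unfolding N R .
qed

end

theorem proposition1:
  fixes n :: nat and A :: "int mat"
  assumes "signed_adj n A"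
    and "no_self_loops n A"
    and "no_dual_edges n A"
    and "cycle_disjoint n A"
  shows "spectrum_mset A =
           replicate_mset (n - (\<Sum>k=3..n. k * (cpos n A k + cneg n A k))) 0
           + (\<Sum>k=3..n. repeat_mset (cpos n A k) (roots_of_unity k)
                        + repeat_mset (cneg n A k) (roots_of_minus_one k))"
proof -
  interpret sdg n A using assms by unfold_locales
  show ?thesis by (rule main)
qed

end
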